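(* Let $\mathbf{X}=(\mathbf{x}^1,\dots,\mathbf{x}^n)\in\mathbb{R}^{n\times T\times q}$ and $\mathbf{X}'=(\mathbf{x}'^1,\dots,\mathbf{x}'^{n'})\in\mathbb{R}^{n'\times T'\times q}$ be time series datasets with sample weights $\mathbf{w}\in\Delta_n$, $\mathbf{w}'\in\Delta_{n'}$, and let $\mathbf{Y}=(y_1,\dots,y_n)\in\mathcal{C}^n$ be class labels of the samples of $\mathbf{X}$, with $\mathcal{C}$ a finite set of classes. Let $\mathrm{cost}(\mathrm{OT}_{\mathrm{DTW}}(\mathbf{X},\mathbf{X}'))$, $\mathrm{cost}(|\mathcal{C}|\text{-MAD}(\mathbf{X},\mathbf{X}',\mathbf{Y}))$ and $\mathrm{cost}(\mathrm{MAD}(\mathbf{X},\mathbf{X}'))$ denote the optimal values of the three optimization problems defined in the context. Then $$\mathrm{cost}(\mathrm{OT}_{\mathrm{DTW}}(\mathbf{X},\mathbf{X}'))\le \mathrm{cost}(|\mathcal{C}|\text{-MAD}(\mathbf{X},\mathbf{X}',\mathbf{Y}))\le \mathrm{cost}(\mathrm{MAD}(\mathbf{X},\mathbf{X}')).$$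
   Context: Here $\Delta_n$ is the probability simplex in $\mathbb{R}^n$, and $\mathbf{x}^i_t\in\mathbb{R}^q$ is the $t$-th time step of the $i$-th series. The set of couplings is $\Gamma(\mathbf{w},\mathbf{w}')=\{\boldsymbol\gamma\in\mathbb{R}_{\ge0}^{n\times n'}:\boldsymbol\gamma\mathbf{1}_{n'}=\mathbf{w},\ \boldsymbol\gamma^\top\mathbf{1}_n=\mathbf{w}'\}$. $\mathcal{A}(T,T')$ is the set of admissible DTW alignments. These are binary matrices $\boldsymbol\pi\in\{0,1\}^{T\times T'}$ whose nonzero entries form a path from $(1,1)$ to $(T,T')$ using only steps $(1,0)$, $(0,1)$ or $(1,1)$. The ground cost tensor is $\mathbf{L}(\mathbf{X},\mathbf{X}')$, with entries $L^{i,j}_{t,t'}=\|\mathbf{x}^i_t-\mathbf{x}'^j_{t'}\|_2^2$. For $\boldsymbol\pi\in\mathbb{R}^{T\times T'}$, $\mathbf{L}\otimes\boldsymbol\pi$ is the $n\times n'$ matrix with entries $(\mathbf{L}\otimes\boldsymbol\pi)_{ij}=\sum_{t,t'}L^{i,j}_{t,t'}\pi_{tt'}$. Also $\mathrm{DTW}(\mathbf{x}^i,\mathbf{x}'^j)=\min_{\boldsymbol\pi\in\mathcal{A}(T,T')}\sum_{t,t'}L^{i,j}_{t,t'}\pi_{tt'}$. The three problems are: - $\mathrm{OT}_{\mathrm{DTW}}(\mathbf{X},\mathbf{X}')$ is $\min_{\boldsymbol\gamma\in\Gamma(\mathbf{w},\mathbf{w}')}\sum_{i,j}\gamma_{ij}\,\mathrm{DTW}(\mathbf{x}^i,\mathbf{x}'^j)$.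 - $\mathrm{MAD}(\mathbf{X},\mathbf{X}')$ is $\min_{\boldsymbol\gamma\in\Gamma(\mathbf{w},\mathbf{w}'),\ \boldsymbol\pi\in\mathcal{A}(T,T')}\langle\mathbf{L}(\mathbf{X},\mathbf{X}')\otimes\boldsymbol\pi,\boldsymbol\gamma\rangle$, where $\langle\cdot,\cdot\rangle$ is the Frobenius inner product. - $|\mathcal{C}|\text{-MAD}(\mathbf{X},\mathbf{X}',\mathbf{Y})$ is $\min\sum_{i,j}\gamma_{ij}\sum_{t,t'}L^{i,j}_{t,t'}\pi^{(y_i)}_{tt'}$. The minimum is over $\boldsymbol\gamma\in\Gamma(\mathbf{w},\mathbf{w}')$ and one alignment $\boldsymbol\pi^{(c)}\in\mathcal{A}(T,T')$ per class $c\in\mathcal{C}$. *)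

theory Defs
  imports "HOL-Analysis.Analysis"
begin

text \<open>Indices are 0-based: samples 0..<n, time steps 0..<T, features are the
  coordinates of a vector in real^'q.  A dataset is a function
  X :: nat => nat => real^'q, X i t = t-th time step of the i-th series.\<close>

definition prob_simplex :: "nat \<Rightarrow> (nat \<Rightarrow> real) \<Rightarrow> bool" where
  "prob_simplex n w \<longleftrightarrow> (\<forall>i<n. 0 \<le> w i) \<and> (\<Sum>i<n. w i) = 1"

definition couplings :: "nat \<Rightarrow> nat \<Rightarrow> (nat \<Rightarrow> real) \<Rightarrow> (nat \<Rightarrow> real)
    \<Rightarrow> (nat \<Rightarrow> nat \<Rightarrow> real) set" where
  "couplings n n' w w' = {\<gamma>.
     (\<forall>i j. 0 \<le> \<gamma> i j) \<and> (\<forall>i j. (i \<ge> n \<or> j \<ge> n') \<longrightarrow> \<gamma> i j = 0) \<and>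
     (\<forall>i<n. (\<Sum>j<n'. \<gamma> i j) = w i) \<and> (\<forall>j<n'. (\<Sum>i<n. \<gamma> i j) = w' j)}"

definition dtw_path :: "nat \<Rightarrow> nat \<Rightarrow> (nat \<times> nat) list \<Rightarrow> bool" where
  "dtw_path T T' p \<longleftrightarrow> p \<noteq> [] \<and> hd p = (0, 0) \<and> last p = (T - 1, T' - 1) \<and>
     (\<forall>k. Suc k < length p \<longrightarrow>
        (fst (p ! Suc k), snd (p ! Suc k)) \<in>
          {(fst (p ! k) + 1, snd (p ! k)), (fst (p ! k), snd (p ! k) + 1),
           (fst (p ! k) + 1, snd (p ! k) + 1)})"

definition alignments :: "nat \<Rightarrow> nat \<Rightarrow> (nat \<Rightarrow> nat \<Rightarrow> real) set" where
  "alignments T T' = {\<pi>. \<exists>p. dtw_path T T' p \<and>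
       \<pi> = (\<lambda>t t'. if (t, t') \<in> set p then 1 else 0)}"

definition ground_cost :: "(nat \<Rightarrow> nat \<Rightarrow> real^'q) \<Rightarrow> (nat \<Rightarrow> nat \<Rightarrow> real^'q)
    \<Rightarrow> nat \<Rightarrow> nat \<Rightarrow> nat \<Rightarrow> nat \<Rightarrow> real" where
  "ground_cost X X' i j t t' = (norm (X i t - X' j t'))\<^sup>2"

definition align_cost :: "nat \<Rightarrow> nat \<Rightarrow> (nat \<Rightarrow> nat \<Rightarrow> real^'q) \<Rightarrow> (nat \<Rightarrow> nat \<Rightarrow> real^'q)
    \<Rightarrow> nat \<Rightarrow> nat \<Rightarrow> (nat \<Rightarrow> nat \<Rightarrow> real) \<Rightarrow> real" where
  "align_cost T T' X X' i j \<pi> = (\<Sum>t<T. \<Sum>t'<T'. ground_cost X X' i j t t' * \<pi> t t')"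

definition DTW :: "nat \<Rightarrow> nat \<Rightarrow> (nat \<Rightarrow> nat \<Rightarrow> real^'q) \<Rightarrow> (nat \<Rightarrow> nat \<Rightarrow> real^'q)
    \<Rightarrow> nat \<Rightarrow> nat \<Rightarrow> real" where
  "DTW T T' X X' i j = Inf (align_cost T T' X X' i j ` alignments T T')"

definition OT_DTW_cost :: "nat \<Rightarrow> nat \<Rightarrow> nat \<Rightarrow> nat \<Rightarrow> (nat \<Rightarrow> nat \<Rightarrow> real^'q)
    \<Rightarrow> (nat \<Rightarrow> nat \<Rightarrow> real^'q) \<Rightarrow> (nat \<Rightarrow> real) \<Rightarrow> (nat \<Rightarrow> real) \<Rightarrow> real" where
  "OT_DTW_cost n n' T T' X X' w w' =
     Inf ((\<lambda>\<gamma>. \<Sum>i<n. \<Sum>j<n'. \<gamma> i j * DTW T T' X X' i j) ` couplings n n' w w')"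

definition MAD_cost :: "nat \<Rightarrow> nat \<Rightarrow> nat \<Rightarrow> nat \<Rightarrow> (nat \<Rightarrow> nat \<Rightarrow> real^'q)
    \<Rightarrow> (nat \<Rightarrow> nat \<Rightarrow> real^'q) \<Rightarrow> (nat \<Rightarrow> real) \<Rightarrow> (nat \<Rightarrow> real) \<Rightarrow> real" where
  "MAD_cost n n' T T' X X' w w' =
     Inf ((\<lambda>(\<gamma>, \<pi>). \<Sum>i<n. \<Sum>j<n'. align_cost T T' X X' i j \<pi> * \<gamma> i j)
          ` (couplings n n' w w' \<times> alignments T T'))"

definition CMAD_cost :: "nat \<Rightarrow> nat \<Rightarrow> nat \<Rightarrow> nat \<Rightarrow> (nat \<Rightarrow> nat \<Rightarrow> real^'q)
    \<Rightarrow> (nat \<Rightarrow> nat \<Rightarrow> real^'q) \<Rightarrow> (nat \<Rightarrow> real) \<Rightarrow> (nat \<Rightarrow> real)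
    \<Rightarrow> 'c set \<Rightarrow> (nat \<Rightarrow> 'c) \<Rightarrow> real" where
  "CMAD_cost n n' T T' X X' w w' C Y =
     Inf ((\<lambda>(\<gamma>, Pc). \<Sum>i<n. \<Sum>j<n'. \<gamma> i j * align_cost T T' X X' i j (Pc (Y i)))
          ` (couplings n n' w w' \<times> {Pc. \<forall>c\<in>C. Pc c \<in> alignments T T'}))"

end

theory Submission
  imports Defs
begin

lemma path_exists:
  assumes "1 \<le> T" "1 \<le> T'"
  shows "dtw_path T T' (map (\<lambda>k. (min k (T - 1), k - (T - 1))) [0..<T + T' - 1])"
proof -
  let ?f = "\<lambda>k::nat. (min k (T - 1), k - (T - 1))"
  have ne: "[0..<T + T' - 1] \<noteq> []" using assms by simp
  have "last (map ?f [0..<T + T' - 1]) = ?f (T + T' - 2)"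
    using assms by (simp add: last_map ne)
  also have "\<dots> = (T - 1, T' - 1)" using assms by auto
  finally have l: "last (map ?f [0..<T + T' - 1]) = (T - 1, T' - 1)" .
  have h: "hd (map ?f [0..<T + T' - 1]) = (0,0)" using assms by (simp add: hd_map ne)
  show ?thesis unfolding dtw_path_def
    using ne l h by (auto simp: min_def)
qed

lemma alignments_ne:
  assumes "1 \<le> T" "1 \<le> T'"
  shows "alignments T T' \<noteq> {}"
  using path_exists[OF assms] unfolding alignments_def by blast

lemma alignments_nonneg: "\<pi> \<in> alignments T T' \<Longrightarrow> 0 \<le> \<pi> t t'"
  unfolding alignments_def by auto

lemma align_cost_nonneg: "\<pi> \<in> alignments T T' \<Longrightarrow> 0 \<le> align_cost T T' X X' i j \<pi>"
  unfolding align_cost_def ground_cost_def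
  by (intro sum_nonneg mult_nonneg_nonneg) (auto intro: alignments_nonneg)

lemma couplings_ne:
  assumes "prob_simplex n w" "prob_simplex n' w'"
  shows "(\<lambda>i j. if i < n \<and> j < n' then w i * w' j else 0) \<in> couplings n n' w w'"
  using assms unfolding couplings_def prob_simplex_def
  by (auto simp: sum_distrib_left[symmetric] sum_distrib_right[symmetric])

lemma DTW_nonneg:
  assumes "1 \<le> T" "1 \<le> T'"
  shows "0 \<le> DTW T T' X X' i j"
  unfolding DTW_def using alignments_ne[OF assms]
  by (intro cInf_greatest) (auto intro: align_cost_nonneg)

lemma DTW_le:
  "\<pi> \<in> alignments T T' \<Longrightarrow> DTW T T' X X' i j \<le> align_cost T T' X X' i j \<pi>"
  unfolding DTW_def
  by (rule cInf_lower) (auto intro: align_cost_nonneg simp: bdd_below_def)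

theorem mainTheorem1:
  fixes n n' T T' :: nat
    and X X' :: "nat \<Rightarrow> nat \<Rightarrow> real^'q"
    and w w' :: "nat \<Rightarrow> real"
    and C :: "'c set" and Y :: "nat \<Rightarrow> 'c"
  assumes "1 \<le> T" and "1 \<le> T'"
    and "prob_simplex n w" and "prob_simplex n' w'"
    and "finite C" and "\<forall>i<n. Y i \<in> C"
  shows "OT_DTW_cost n n' T T' X X' w w' \<le> CMAD_cost n n' T T' X X' w w' C Y
       \<and> CMAD_cost n n' T T' X X' w w' C Y \<le> MAD_cost n n' T T' X X' w w'"
proof
  obtain \<pi>0 where p0: "\<pi>0 \<in> alignments T T'" using alignments_ne[OF assms(1,2)] by blast
  have g0: "(\<lambda>i j. if i < n \<and> j < n' then w i * w' j else 0) \<in> couplings n n' w w'"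
    using couplings_ne[OF assms(3,4)] .
  have cnn: "\<gamma> \<in> couplings n n' w w' \<Longrightarrow> 0 \<le> \<gamma> i j" for \<gamma> i j
    unfolding couplings_def by auto
  let ?CS = "(\<lambda>(\<gamma>, Pc). \<Sum>i<n. \<Sum>j<n'. \<gamma> i j * align_cost T T' X X' i j (Pc (Y i)))
          ` (couplings n n' w w' \<times> {Pc. \<forall>c\<in>C. Pc c \<in> alignments T T'})"
  have CSne: "?CS \<noteq> {}" using g0 p0 by (auto intro!: exI[of _ "\<lambda>c. \<pi>0"])
  have CSbdd: "bdd_below ?CS"
    unfolding bdd_below_def
  proof (intro exI[of _ 0] ballI)
    fix x assume "x \<in> ?CS"
    then obtain \<gamma> Pc where g: "\<gamma> \<in> couplings n n' w w'" and P: "\<forall>c\<in>C. Pc c \<in> alignments T T'"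
      and x: "x = (\<Sum>i<n. \<Sum>j<n'. \<gamma> i j * align_cost T T' X X' i j (Pc (Y i)))" by auto
    show "0 \<le> x" unfolding x
      using assms(6) P cnn[OF g]
      by (intro sum_nonneg mult_nonneg_nonneg) (auto intro: align_cost_nonneg)
  qed
  show "OT_DTW_cost n n' T T' X X' w w' \<le> CMAD_cost n n' T T' X X' w w' C Y"
    unfolding CMAD_cost_def
  proof (rule cInf_greatest[OF CSne])
    fix x assume "x \<in> ?CS"
    then obtain \<gamma> Pc where g: "\<gamma> \<in> couplings n n' w w'" and P: "\<forall>c\<in>C. Pc c \<in> alignments T T'"
      and x: "x = (\<Sum>i<n. \<Sum>j<n'. \<gamma> i j * align_cost T T' X X' i j (Pc (Y i)))" by auto
    have "OT_DTW_cost n n' T T' X X' w w' \<le> (\<Sum>i<n. \<Sum>j<n'. \<gamma> i j * DTW T T' X X' i j)"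
      unfolding OT_DTW_cost_def
      apply (rule cInf_lower)
      using g apply blast
    proof (rule bdd_belowI[where m=0])
      fix y assume "y \<in> (\<lambda>\<gamma>. \<Sum>i<n. \<Sum>j<n'. \<gamma> i j * DTW T T' X X' i j) ` couplings n n' w w'"
      then obtain g' where g': "g' \<in> couplings n n' w w'"
        and y: "y = (\<Sum>i<n. \<Sum>j<n'. g' i j * DTW T T' X X' i j)" by auto
      show "0 \<le> y" unfolding y using cnn[OF g'] DTW_nonneg[OF assms(1,2)]
        by (intro sum_nonneg mult_nonneg_nonneg) auto
    qed
    also have "\<dots> \<le> x" unfolding x
      using assms(6) P cnn[OF g]
      by (intro sum_mono mult_left_mono DTW_le) auto
    finally show "OT_DTW_cost n n' T T' X X' w w' \<le> x" .
  qed
  show "CMAD_cost n n' T T' X X' w w' C Y \<le> MAD_cost n n' T T' X X' w w'"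
    unfolding MAD_cost_def
  proof (rule cInf_greatest)
    show "(\<lambda>(\<gamma>, \<pi>). \<Sum>i<n. \<Sum>j<n'. align_cost T T' X X' i j \<pi> * \<gamma> i j)
          ` (couplings n n' w w' \<times> alignments T T') \<noteq> {}" using g0 p0 by blast
  next
    fix x assume "x \<in> (\<lambda>(\<gamma>, \<pi>). \<Sum>i<n. \<Sum>j<n'. align_cost T T' X X' i j \<pi> * \<gamma> i j)
          ` (couplings n n' w w' \<times> alignments T T')"
    then obtain \<gamma> \<pi> where g: "\<gamma> \<in> couplings n n' w w'" and p: "\<pi> \<in> alignments T T'"
      and x: "x = (\<Sum>i<n. \<Sum>j<n'. align_cost T T' X X' i j \<pi> * \<gamma> i j)" by auto
    have "x \<in> ?CS" unfolding x using g p
      by (auto simp: mult.commute intro!: image_eqI[of _ _ "(\<gamma>, \<lambda>c. \<pi>)"])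
    then show "CMAD_cost n n' T T' X X' w w' C Y \<le> x"
      unfolding CMAD_cost_def by (rule cInf_lower[OF _ CSbdd])
  qed
qed

end
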